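(* Let $T>0$, $\gamma\in(0,T]$, $\mathcal{T}=[0,T]$, $\mathcal{D}$ the set of Lebesgue measurable $\delta:\mathcal{T}\to[-1,1]$ with $\int_{\mathcal{T}}|\delta(t)|\,\mathrm{d}t\le\gamma$, $\eta^+,\eta^-\in(0,1]$, $\eta_d=\frac{1}{\eta^-}-\eta^+$, and $y(x^b,x^r,\delta,y_0,t)=y_0+\int_0^t\big(\eta^+[x^b+\delta(s)x^r]^+-\frac{1}{\eta^-}[x^b+\delta(s)x^r]^-\big)\mathrm{d}s$. Let $\tilde\delta$ be a random process with trajectories in $\mathcal{D}$, let $\mathbb{P}_\xi$ be the probability measure on $[-1,1]$ given by $\mathbb{P}_\xi(B)=\mathbb{E}\big[\frac1T\int_{\mathcal{T}}\mathbf 1_B(\tilde\delta(t))\,\mathrm{d}t\big]$, assumed to have mean zero, with cumulative distribution function $F$, and let $\varphi(z)=\int_{-1}^zF(\xi)\,\mathrm{d}\xi$. Then for all $x^b\in\mathbb{R}$, $x^r\ge0$, $y_0\in\mathbb{R}$, $$\mathbb{E}\big[y(x^b,x^r,\tilde\delta,y_0,T)\big]=y_0+T\Big(\eta^+x^b-\eta_d\,x^r\varphi\Big(-\frac{x^b}{x^r}\Big)\Big),$$ where for $x^r=0$ the term $x^r\varphi(-x^b/x^r)$ is understood as its limit $[x^b]^-$ (perspective function). Moreover, this expected terminal state-of-charge is continuous and jointly concave in $(x^b,x^r)\in\mathbb{R}\times\mathbb{R}_+$, strictly increasing and unbounded above in $x^b$, and nonincreasing in $x^r$.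
   Context: $[a]^+=\max\{a,0\}$, $[a]^-=\max\{-a,0\}$; the process $\tilde\delta$ is assumed jointly measurable in time and outcome so that the expectations are well defined. $\varphi$ is the super-cumulative distribution function of $\mathbb{P}_\xi$. *)

theory Defs
  imports "HOL-Probability.Probability"
begin

definition pospart :: "real \<Rightarrow> real" where
  "pospart a = max a 0"

definition negpart :: "real \<Rightarrow> real" where
  "negpart a = max (- a) 0"

text \<open>Admissible deviation trajectories: the set D (trajectories are functions on the
  reals; only their restriction to [0,T] matters).\<close>
definition admissible :: "real \<Rightarrow> real \<Rightarrow> (real \<Rightarrow> real) \<Rightarrow> bool" where
  "admissible T \<gamma> \<delta> \<longleftrightarrow>
     \<delta> \<in> borel_measurable (restrict_space lebesgue {0..T})
   \<and> (\<forall>t\<in>{0..T}. \<delta> t \<in> {-1..1})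
   \<and> (\<integral>t\<in>{0..T}. \<bar>\<delta> t\<bar> \<partial>lebesgue) \<le> \<gamma>"

definition soc :: "real \<Rightarrow> real \<Rightarrow> real \<Rightarrow> real \<Rightarrow> (real \<Rightarrow> real) \<Rightarrow> real \<Rightarrow> real \<Rightarrow> real" where
  "soc \<eta>p \<eta>m xb xr \<delta> y0 t =
     y0 + (\<integral>s\<in>{0..t}. (\<eta>p * pospart (xb + \<delta> s * xr)
                          - (1 / \<eta>m) * negpart (xb + \<delta> s * xr)) \<partial>lebesgue)"

definition persp :: "(real \<Rightarrow> real) \<Rightarrow> real \<Rightarrow> real \<Rightarrow> real" where
  "persp \<phi> xb xr = (if xr = 0 then negpart xb else xr * \<phi> (- xb / xr))"

end

theory Submission
  imports Defs
begin

lemma key_measure: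
  fixes M :: "'a measure" and P :: "real measure" and \<delta> :: "'a \<Rightarrow> real \<Rightarrow> real" and T :: real
  assumes M: "prob_space M" and T: "T > 0"
    and traj: "\<forall>\<omega>\<in>space M. \<forall>t\<in>{0..T}. \<delta> \<omega> t \<in> {-1..1}"
    and joint: "(\<lambda>(\<omega>, t). \<delta> \<omega> t) \<in> borel_measurable (M \<Otimes>\<^sub>M restrict_space lebesgue {0..T})"
    and Psets: "sets P = sets borel"
    and Pdef: "\<forall>B\<in>sets borel. emeasure P B =
           ennreal (\<integral>\<omega>. (1 / T) * (\<integral>t\<in>{0..T}. indicator B (\<delta> \<omega> t) \<partial>lebesgue) \<partial>M)"
  shows "P = density (distr (M \<Otimes>\<^sub>M restrict_space lebesgue {0..T}) borel (\<lambda>(\<omega>, t). \<delta> \<omega> t)) (\<lambda>_. ennreal (1/T))"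
proof -
  define L where "L = restrict_space lebesgue {0..T}"
  interpret M: prob_space M by fact
  have spL: "space L = {0..T}" by (simp add: L_def)
  have L_em: "emeasure L {0..T} = ennreal T"
    unfolding L_def using T by (subst emeasure_restrict_space) auto
  interpret L: finite_measure L
    by (rule finite_measureI) (simp add: spL L_em)
  interpret N: pair_sigma_finite M L
    by (simp add: pair_sigma_finite_def M.sigma_finite_measure_axioms L.sigma_finite_measure_axioms)
  interpret NF: finite_measure "M \<Otimes>\<^sub>M L"
    by (rule finite_measure_pair_measure) (auto intro: L.finite_measure_axioms M.finite_measure_axioms)
  define D where "D = (\<lambda>(\<omega>, t). \<delta> \<omega> t)"
  have D[measurable]: "D \<in> borel_measurable (M \<Otimes>\<^sub>M L)" using joint by (simp add: D_def L_def)
  show ?thesis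
    unfolding L_def[symmetric] D_def[symmetric]
  proof (rule measure_eqI)
    show "sets P = sets (density (distr (M \<Otimes>\<^sub>M L) borel D) (\<lambda>_. ennreal (1 / T)))"
      using Psets by simp
    fix B assume "B \<in> sets P"
    then have B[measurable]: "B \<in> sets borel" using Psets by simp
    have "emeasure (density (distr (M \<Otimes>\<^sub>M L) borel D) (\<lambda>_. ennreal (1 / T))) B
        = ennreal (1/T) * emeasure (M \<Otimes>\<^sub>M L) (D -` B \<inter> space (M \<Otimes>\<^sub>M L))"
      by (simp add: emeasure_density_const emeasure_distr)
    also have "\<dots> = ennreal (1/T) * ennreal (measure (M \<Otimes>\<^sub>M L) (D -` B \<inter> space (M \<Otimes>\<^sub>M L)))"
      by (simp add: NF.emeasure_eq_measure)
    also have "measure (M \<Otimes>\<^sub>M L) (D -` B \<inter> space (M \<Otimes>\<^sub>M L)) = (\<integral>z. indicator B (D z) \<partial>(M \<Otimes>\<^sub>M L))"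
    proof -
      have "(\<integral>z. indicator B (D z) \<partial>(M \<Otimes>\<^sub>M L)) = (\<integral>z. indicator (D -` B \<inter> space (M \<Otimes>\<^sub>M L)) z \<partial>(M \<Otimes>\<^sub>M L))"
        by (rule Bochner_Integration.integral_cong) (auto simp: indicator_def)
      also have "\<dots> = measure (M \<Otimes>\<^sub>M L) (D -` B \<inter> space (M \<Otimes>\<^sub>M L))"
        by (simp add: Int_absorb2)
      finally show ?thesis by simp
    qed
    also have "(\<integral>z. indicator B (D z) \<partial>(M \<Otimes>\<^sub>M L)) = (\<integral>\<omega>. (\<integral>t. indicator B (D (\<omega>, t)) \<partial>L) \<partial>M :: real)"
    proof -
      have int: "integrable (M \<Otimes>\<^sub>M L) (\<lambda>z. indicator B (D z) :: real)"
        by (rule NF.integrable_const_bound[where B=1]) auto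
      show ?thesis using N.integral_fst'[OF int] by simp
    qed
    also have "\<dots> = (\<integral>\<omega>. (\<integral>t\<in>{0..T}. indicator B (\<delta> \<omega> t) \<partial>lebesgue) \<partial>M)"
      unfolding L_def set_lebesgue_integral_def
      by (subst integral_restrict_space) (auto simp: D_def)
    finally show "emeasure P B = emeasure (density (distr (M \<Otimes>\<^sub>M L) borel D) (\<lambda>_. ennreal (1 / T))) B"
      using Pdef B T by (simp add: ennreal_mult'[symmetric] Bochner_Integration.integral_mult_right_zero)
  qed
qed

locale setting =
  fixes M :: "'a measure" and P :: "real measure" and \<delta> :: "'a \<Rightarrow> real \<Rightarrow> real" and T :: real
  assumes M: "prob_space M" and T: "T > 0"
    and traj: "\<forall>\<omega>\<in>space M. \<forall>t\<in>{0..T}. \<delta> \<omega> t \<in> {-1..1}"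
    and joint: "(\<lambda>(\<omega>, t). \<delta> \<omega> t) \<in> borel_measurable (M \<Otimes>\<^sub>M restrict_space lebesgue {0..T})"
    and Psets: "sets P = sets borel"
    and Pdef: "\<forall>B\<in>sets borel. emeasure P B =
           ennreal (\<integral>\<omega>. (1 / T) * (\<integral>t\<in>{0..T}. indicator B (\<delta> \<omega> t) \<partial>lebesgue) \<partial>M)"
begin

definition L where "L = restrict_space lebesgue {0..T}"
definition D where "D = (\<lambda>(\<omega>, t). \<delta> \<omega> t)"

lemma spL: "space L = {0..T}" by (simp add: L_def)

lemma L_em: "emeasure L {0..T} = ennreal T"
  unfolding L_def using T by (subst emeasure_restrict_space) auto

sublocale M: prob_space M by (rule M)

sublocale L: finite_measure L
  by (rule finite_measureI) (simp add: spL L_em)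

sublocale N: pair_sigma_finite M L
  by (simp add: pair_sigma_finite_def M.sigma_finite_measure_axioms L.sigma_finite_measure_axioms)

sublocale NF: finite_measure "M \<Otimes>\<^sub>M L"
  by (rule finite_measure_pair_measure) (auto intro: L.finite_measure_axioms M.finite_measure_axioms)

lemma D[measurable]: "D \<in> borel_measurable (M \<Otimes>\<^sub>M L)" using joint by (simp add: D_def L_def)

lemma D_range: "z \<in> space (M \<Otimes>\<^sub>M L) \<Longrightarrow> D z \<in> {-1..1}"
  using traj by (auto simp: D_def space_pair_measure spL)

lemma P_eq: "P = density (distr (M \<Otimes>\<^sub>M L) borel D) (\<lambda>_. ennreal (1/T))"
  unfolding L_def D_def by (rule key_measure[OF M T traj joint Psets Pdef])

lemma P_prob: "prob_space P"
proof
  have "emeasure P UNIV = ennreal (1/T) * emeasure (M \<Otimes>\<^sub>M L) (space (M \<Otimes>\<^sub>M L))"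
    by (simp add: P_eq emeasure_density_const emeasure_distr)
  also have "\<dots> = ennreal (1/T) * (emeasure M (space M) * emeasure L (space L))"
    unfolding space_pair_measure by (subst L.emeasure_pair_measure_Times) auto
  also have "\<dots> = 1" using T by (simp add: spL L_em M.emeasure_space_1 ennreal_mult'[symmetric])
  finally show "emeasure P (space P) = 1" using Psets by (simp add: sets_eq_imp_space_eq)
qed

sublocale PP: prob_space P by (rule P_prob)

lemma P_AE: "AE x in P. x \<in> {-1..1}"
proof (rule AE_I')
  show "{x\<in>space P. x \<notin> {-1..1}} \<in> null_sets P"
  proof -
    have "emeasure P (- {-1..1}) = ennreal (1/T) * emeasure (M \<Otimes>\<^sub>M L) (D -` (- {-1..1}) \<inter> space (M \<Otimes>\<^sub>M L))"
      by (simp add: P_eq emeasure_density_const emeasure_distr)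
    also have "D -` (- {-1..1}) \<inter> space (M \<Otimes>\<^sub>M L) = {}" using D_range by auto
    finally have "emeasure P (- {-1..1}) = 0" by simp
    moreover have "- {-1..1} \<in> sets P" using Psets by simp
    moreover have "{x\<in>space P. x \<notin> {-1..1}} = - {-1..1}" using Psets by (auto simp: sets_eq_imp_space_eq)
    ultimately show ?thesis by auto
  qed
qed auto

lemma key_integral:
  fixes g :: "real \<Rightarrow> real" and K :: real
  assumes g[measurable]: "g \<in> borel_measurable borel" and bnd: "\<And>x. x \<in> {-1..1} \<Longrightarrow> \<bar>g x\<bar> \<le> K"
  shows "integrable M (\<lambda>\<omega>. \<integral>t\<in>{0..T}. g (\<delta> \<omega> t) \<partial>lebesgue)"
    and "(\<integral>\<omega>. (\<integral>t\<in>{0..T}. g (\<delta> \<omega> t) \<partial>lebesgue) \<partial>M) = T * (\<integral>x. g x \<partial>P)"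
    and "integrable P g"
proof -
  have int: "integrable (M \<Otimes>\<^sub>M L) (\<lambda>z. g (D z))"
    by (rule NF.integrable_const_bound[where B=K]) (auto intro!: bnd D_range)
  have eq: "\<And>\<omega>. (\<integral>t\<in>{0..T}. g (\<delta> \<omega> t) \<partial>lebesgue) = (\<integral>t. g (D (\<omega>, t)) \<partial>L)"
    unfolding L_def set_lebesgue_integral_def
    by (subst integral_restrict_space) (auto simp: D_def)
  show "integrable M (\<lambda>\<omega>. \<integral>t\<in>{0..T}. g (\<delta> \<omega> t) \<partial>lebesgue)"
    unfolding eq using N.integrable_fst'[OF int] by simp
  have "(\<integral>x. g x \<partial>P) = (\<integral>x. (1/T) *\<^sub>R g x \<partial>distr (M \<Otimes>\<^sub>M L) borel D)"
    unfolding P_eq using T by (subst integral_density) auto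
  also have "\<dots> = (1/T) * (\<integral>z. g (D z) \<partial>(M \<Otimes>\<^sub>M L))"
    by (subst integral_distr) auto
  also have "(\<integral>z. g (D z) \<partial>(M \<Otimes>\<^sub>M L)) = (\<integral>\<omega>. (\<integral>t\<in>{0..T}. g (\<delta> \<omega> t) \<partial>lebesgue) \<partial>M)"
    unfolding eq using N.integral_fst'[OF int] by simp
  finally show "(\<integral>\<omega>. (\<integral>t\<in>{0..T}. g (\<delta> \<omega> t) \<partial>lebesgue) \<partial>M) = T * (\<integral>x. g x \<partial>P)"
    using T by simp
  show "integrable P g"
    by (rule PP.integrable_const_bound[where B=K]) (use P_AE bnd measurable_cong_sets[OF Psets refl, of borel] in \<open>auto simp: Psets\<close>)
qed

definition G where "G xb xr = (\<integral>x. negpart (xb + x * xr) \<partial>P)"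

lemma negpart_meas[measurable]: "negpart \<in> borel_measurable borel"
  unfolding negpart_def by measurable
lemma pospart_meas[measurable]: "pospart \<in> borel_measurable borel"
  unfolding pospart_def by measurable

lemma pos_neg: "pospart u = u + negpart u" by (simp add: pospart_def negpart_def max_def)

lemma bnd_lin: "(x::real) \<in> {-1..1} \<Longrightarrow> \<bar>xb + x * xr\<bar> \<le> \<bar>xb\<bar> + \<bar>xr\<bar>"
proof -
  assume "x \<in> {-1..1}"
  then have "\<bar>x\<bar> \<le> 1" by (auto simp: abs_le_iff)
  then have "\<bar>x * xr\<bar> \<le> \<bar>xr\<bar>" by (simp add: abs_mult mult_left_le_one_le)
  then show ?thesis by linarith
qed

lemma int_negpart: "integrable P (\<lambda>x. negpart (xb + x * xr))"
proof (rule key_integral(3)[where K="\<bar>xb\<bar> + \<bar>xr\<bar>"])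
  fix x :: real assume "x \<in> {-1..1}"
  then show "\<bar>negpart (xb + x * xr)\<bar> \<le> \<bar>xb\<bar> + \<bar>xr\<bar>"
    using bnd_lin[of x xb xr] by (auto simp: negpart_def)
qed auto

lemma int_id: "integrable P (\<lambda>x. x)"
  by (rule key_integral(3)[where K=1]) auto

lemma Ey_formula:
  assumes m: "0 < \<eta>m" and mean: "(\<integral>x. x \<partial>P) = 0"
  shows "(\<integral>\<omega>. soc \<eta>p \<eta>m xb xr (\<delta> \<omega>) y0 T \<partial>M) = y0 + T * (\<eta>p * xb - (1/\<eta>m - \<eta>p) * G xb xr)"
proof -
  define g where "g x = \<eta>p * pospart (xb + x * xr) - (1 / \<eta>m) * negpart (xb + x * xr)" for x
  have gm[measurable]: "g \<in> borel_measurable borel" unfolding g_def by measurable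
  have gb: "\<bar>g x\<bar> \<le> \<bar>\<eta>p\<bar> * (\<bar>xb\<bar> + \<bar>xr\<bar>) + (1/\<eta>m) * (\<bar>xb\<bar> + \<bar>xr\<bar>)" if "x \<in> {-1..1}" for x
  proof -
    have a: "\<bar>pospart (xb + x * xr)\<bar> \<le> \<bar>xb\<bar> + \<bar>xr\<bar>" "\<bar>negpart (xb + x * xr)\<bar> \<le> \<bar>xb\<bar> + \<bar>xr\<bar>"
      using bnd_lin[OF that, of xb xr] by (auto simp: pospart_def negpart_def)
    have "\<bar>g x\<bar> \<le> \<bar>\<eta>p\<bar> * \<bar>pospart (xb + x * xr)\<bar> + (1/\<eta>m) * \<bar>negpart (xb + x * xr)\<bar>"
      unfolding g_def using m abs_triangle_ineq4[of "\<eta>p * pospart (xb + x*xr)" "(1/\<eta>m) * negpart (xb+x*xr)"] by (simp add: abs_mult)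
    also have "\<dots> \<le> \<bar>\<eta>p\<bar> * (\<bar>xb\<bar> + \<bar>xr\<bar>) + (1/\<eta>m) * (\<bar>xb\<bar> + \<bar>xr\<bar>)"
      using a m by (intro add_mono mult_left_mono) auto
    finally show ?thesis .
  qed
  note K = key_integral[OF gm gb]
  have soc_eq: "soc \<eta>p \<eta>m xb xr (\<delta> \<omega>) y0 T = y0 + (\<integral>t\<in>{0..T}. g (\<delta> \<omega> t) \<partial>lebesgue)" for \<omega>
    by (simp add: soc_def g_def mult.commute)
  have "(\<integral>\<omega>. soc \<eta>p \<eta>m xb xr (\<delta> \<omega>) y0 T \<partial>M) = y0 + (\<integral>\<omega>. (\<integral>t\<in>{0..T}. g (\<delta> \<omega> t) \<partial>lebesgue) \<partial>M)"
    unfolding soc_eq by (subst Bochner_Integration.integral_add) (use K(1) M.prob_space in auto)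
  also have "\<dots> = y0 + T * (\<integral>x. g x \<partial>P)" using K(2) by simp
  also have "(\<integral>x. g x \<partial>P) = (\<integral>x. \<eta>p * xb + (\<eta>p * xr) * x - (1/\<eta>m - \<eta>p) * negpart (xb + x * xr) \<partial>P)"
  proof (rule Bochner_Integration.integral_cong)
    fix x
    show "g x = \<eta>p * xb + (\<eta>p * xr) * x - (1/\<eta>m - \<eta>p) * negpart (xb + x * xr)"
      unfolding g_def pos_neg[of "xb + x * xr"] by (simp add: algebra_simps)
  qed simp
  also have "\<dots> = \<eta>p * xb + (\<eta>p * xr) * (\<integral>x. x \<partial>P) - (1/\<eta>m - \<eta>p) * G xb xr"
    unfolding G_def using int_negpart int_id PP.prob_space
    by (subst Bochner_Integration.integral_diff Bochner_Integration.integral_add; auto)+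
  finally show ?thesis using mean by simp
qed

lemma negpart_convex:
  assumes "0 \<le> u" "0 \<le> v" "u + v = 1"
  shows "negpart (u * A + v * B) \<le> u * negpart A + v * negpart B"
proof -
  have "u * (-A) \<le> u * negpart A" "v * (-B) \<le> v * negpart B"
    using mult_left_mono[of "-A" "negpart A" u] mult_left_mono[of "-B" "negpart B" v] assms
    by (auto simp: negpart_def)
  moreover have "0 \<le> u * negpart A" "0 \<le> v * negpart B"
    using assms by (auto simp: negpart_def)
  ultimately show ?thesis by (auto simp: negpart_def algebra_simps)
qed

lemma negpart_lip: "\<bar>negpart A - negpart B\<bar> \<le> \<bar>A - B\<bar>"
  by (simp add: negpart_def max_def abs_if)

lemma G_convex:
  assumes "0 \<le> u" "0 \<le> v" "u + v = 1"
  shows "G (u * a + v * b) (u * c + v * d) \<le> u * G a c + v * G b d"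
proof -
  have "G (u * a + v * b) (u * c + v * d) \<le> (\<integral>x. u * negpart (a + x * c) + v * negpart (b + x * d) \<partial>P)"
    unfolding G_def
  proof (rule integral_mono)
    fix x
    have "u * a + v * b + x * (u * c + v * d) = u * (a + x * c) + v * (b + x * d)" by (simp add: algebra_simps)
    then show "negpart (u * a + v * b + x * (u * c + v * d)) \<le> u * negpart (a + x * c) + v * negpart (b + x * d)"
      using negpart_convex[OF assms] by simp
  qed (use int_negpart in auto)
  also have "\<dots> = u * G a c + v * G b d"
    unfolding G_def using int_negpart by simp
  finally show ?thesis .
qed

lemma G_lip: "\<bar>G a c - G b d\<bar> \<le> \<bar>a - b\<bar> + \<bar>c - d\<bar>"
proof -
  have "\<bar>G a c - G b d\<bar> = \<bar>\<integral>x. negpart (a + x * c) - negpart (b + x * d) \<partial>P\<bar>"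
    unfolding G_def using int_negpart by simp
  also have "\<dots> \<le> (\<integral>x. \<bar>negpart (a + x * c) - negpart (b + x * d)\<bar> \<partial>P)"
    by (rule integral_abs_bound)
  also have "\<dots> \<le> (\<integral>x. \<bar>a - b\<bar> + \<bar>c - d\<bar> \<partial>P)"
  proof (rule integral_mono_AE)
    show "AE x in P. \<bar>negpart (a + x * c) - negpart (b + x * d)\<bar> \<le> \<bar>a - b\<bar> + \<bar>c - d\<bar>"
      using P_AE
    proof eventually_elim
      case (elim x)
      have "\<bar>negpart (a + x * c) - negpart (b + x * d)\<bar> \<le> \<bar>(a - b) + x * (c - d)\<bar>"
        using negpart_lip[of "a + x * c" "b + x * d"] by (simp add: algebra_simps)
      also have "\<dots> \<le> \<bar>a - b\<bar> + \<bar>c - d\<bar>" by (rule bnd_lin[OF elim])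
      finally show ?case .
    qed
  qed (use int_negpart in auto)
  also have "\<dots> = \<bar>a - b\<bar> + \<bar>c - d\<bar>" using PP.prob_space by simp
  finally show ?thesis .
qed

lemma G_anti:
  assumes "a \<le> b" shows "G b c \<le> G a c"
  unfolding G_def
  by (rule integral_mono) (use int_negpart assms in \<open>auto simp: negpart_def\<close>)

lemma G_zero: "G a 0 = negpart a"
  unfolding G_def using PP.prob_space by simp

lemma G_lower:
  assumes mean: "(\<integral>x. x \<partial>P) = 0"
  shows "negpart a \<le> G a c"
proof -
  have "0 \<le> G a c" unfolding G_def by (rule Bochner_Integration.integral_nonneg) (auto simp: negpart_def)
  moreover have "(\<integral>x. - a - x * c \<partial>P) \<le> G a c" unfolding G_def
    by (rule integral_mono) (use int_negpart int_id in \<open>auto simp: negpart_def\<close>)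
  moreover have "(\<integral>x. - a - x * c \<partial>P) = - a"
    using int_id mean PP.prob_space by simp
  ultimately show ?thesis by (simp add: negpart_def)
qed

sublocale RD: real_distribution P
  by unfold_locales (rule Psets)

lemma cdf_meas[measurable]: "cdf P \<in> borel_measurable borel"
  by (rule borel_measurable_mono) (auto simp: mono_def intro: RD.cdf_nondecreasing)

lemma cdf_low: "s < -1 \<Longrightarrow> cdf P s = 0"
proof -
  assume s: "s < -1"
  have "AE x in P. x \<notin> {..s}" using P_AE by eventually_elim (use s in auto)
  then show "cdf P s = 0" unfolding cdf_def using PP.prob_eq_0[of "{..s}"] by auto
qed

lemma H_eq: "(\<integral>x. pospart (z - x) \<partial>P) = (LBINT s=ereal (-1)..ereal z. cdf P s)"
proof (cases "z < -1")
  case True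
  have "(\<integral>x. pospart (z - x) \<partial>P) = 0"
    by (rule integral_eq_zero_AE) (use P_AE True in \<open>auto simp: pospart_def elim!: eventually_mono\<close>)
  moreover have "(LBINT s=ereal (-1)..ereal z. cdf P s) = 0"
  proof -
    have "(LBINT s=ereal (-1)..ereal z. cdf P s) = - (LBINT s : {z<..<-1}. cdf P s)"
      using True by (simp add: interval_lebesgue_integral_def)
    also have "(LBINT s : {z<..<-1}. cdf P s) = (LBINT s : {z<..<-1}. 0)"
      by (rule set_lebesgue_integral_cong) (auto intro!: cdf_low)
    finally show ?thesis by (simp add: set_lebesgue_integral_def)
  qed
  ultimately show ?thesis by simp
next
  case False
  then have z: "-1 \<le> z" by simp
  interpret PL: pair_sigma_finite P lborel
    by (simp add: pair_sigma_finite_def PP.sigma_finite_measure_axioms lborel.sigma_finite_measure_axioms)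
  define S where "S = {p :: real \<times> real. -1 \<le> snd p \<and> snd p \<le> z \<and> fst p \<le> snd p}"
  have Sm: "S \<in> sets (P \<Otimes>\<^sub>M lborel)"
  proof -
    have "S = {p \<in> space (P \<Otimes>\<^sub>M lborel). -1 \<le> snd p \<and> snd p \<le> z \<and> fst p \<le> snd p}"
      using sets_eq_imp_space_eq[OF Psets] by (auto simp: S_def space_pair_measure)
    also have "\<dots> \<in> sets (P \<Otimes>\<^sub>M lborel)" by measurable
    finally show ?thesis .
  qed
  have "(\<integral>\<^sup>+ s. (\<integral>\<^sup>+ x. indicator S (x, s) \<partial>P) \<partial>lborel) = (\<integral>\<^sup>+ x. (\<integral>\<^sup>+ s. indicator S (x, s) \<partial>lborel) \<partial>P)"
    by (rule PL.Fubini) (use Sm in auto)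
  also have "(\<lambda>s. (\<integral>\<^sup>+ x. indicator S (x, s) \<partial>P)) = (\<lambda>s. ennreal (indicator {-1..z} s * cdf P s))"
  proof
    fix s
    have "(\<integral>\<^sup>+ x. indicator S (x, s) \<partial>P) = (\<integral>\<^sup>+ x. indicator {-1..z} s * indicator {..s} x \<partial>P)"
      by (rule nn_integral_cong) (auto simp: S_def indicator_def)
    also have "\<dots> = indicator {-1..z} s * emeasure P {..s}"
      by (rule nn_integral_cmult_indicator) (simp add: Psets)
    also have "\<dots> = ennreal (indicator {-1..z} s * cdf P s)"
      by (simp add: PP.emeasure_eq_measure cdf_def indicator_def)
    finally show "(\<integral>\<^sup>+ x. indicator S (x, s) \<partial>P) = ennreal (indicator {-1..z} s * cdf P s)" .
  qed
  also have "(\<integral>\<^sup>+ x. (\<integral>\<^sup>+ s. indicator S (x, s) \<partial>lborel) \<partial>P) = (\<integral>\<^sup>+ x. ennreal (pospart (z - x)) \<partial>P)"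
  proof (rule nn_integral_cong_AE)
    show "AE x in P. (\<integral>\<^sup>+ s. indicator S (x, s) \<partial>lborel) = ennreal (pospart (z - x))"
      using P_AE
    proof eventually_elim
      case (elim x)
      have "(\<integral>\<^sup>+ s. indicator S (x, s) \<partial>lborel) = (\<integral>\<^sup>+ s. indicator {x..z} s \<partial>lborel)"
        by (rule nn_integral_cong) (use elim in \<open>auto simp: S_def indicator_def\<close>)
      also have "\<dots> = ennreal (pospart (z - x))"
        by (simp add: emeasure_lborel_Icc_eq pospart_def ennreal_eq_0_iff)
      finally show ?case .
    qed
  qed
  finally have eq: "(\<integral>\<^sup>+ s. ennreal (indicator {-1..z} s * cdf P s) \<partial>lborel) = (\<integral>\<^sup>+ x. ennreal (pospart (z - x)) \<partial>P)" .
  have i1: "integrable P (\<lambda>x. pospart (z - x))"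
  proof (rule key_integral(3)[where K="\<bar>z\<bar> + 1"])
    fix x :: real assume "x \<in> {-1..1}"
    then show "\<bar>pospart (z - x)\<bar> \<le> \<bar>z\<bar> + 1" by (auto simp: pospart_def)
  qed auto
  have i2: "integrable lborel (\<lambda>s. indicator {-1..z} s * cdf P s)"
  proof (rule integrableI_bounded_set[where A="{-1..z}" and B=1])
    show "AE x in lborel. x \<in> {-1..z} \<longrightarrow> norm (indicator {-1..z} x * cdf P x) \<le> 1"
      using RD.cdf_nonneg RD.cdf_bounded_prob by (auto simp: indicator_def)
  qed (auto simp: emeasure_lborel_Icc_eq)
  have "ennreal (\<integral>s. indicator {-1..z} s * cdf P s \<partial>lborel) = ennreal (\<integral>x. pospart (z - x) \<partial>P)"
    using eq i1 i2 RD.cdf_nonneg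
    by (subst (asm) (1 2) nn_integral_eq_integral) (auto simp: pospart_def)
  moreover have "0 \<le> (\<integral>s. indicator {-1..z} s * cdf P s \<partial>lborel)"
    using RD.cdf_nonneg by (intro Bochner_Integration.integral_nonneg) auto
  moreover have "0 \<le> (\<integral>x. pospart (z - x) \<partial>P)"
    by (intro Bochner_Integration.integral_nonneg) (auto simp: pospart_def)
  ultimately have "(\<integral>s. indicator {-1..z} s * cdf P s \<partial>lborel) = (\<integral>x. pospart (z - x) \<partial>P)"
    by simp
  moreover have "(LBINT s=ereal (-1)..ereal z. cdf P s) = (\<integral>s. indicator {-1..z} s * cdf P s \<partial>lborel)"
    using z by (simp add: interval_integral_Icc set_lebesgue_integral_def)
  ultimately show ?thesis by simp
qed

lemma G_mono_xr:
  assumes mean: "(\<integral>x. x \<partial>P) = 0" and rs: "0 \<le> r" "r \<le> s"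
  shows "G a r \<le> G a s"
proof (cases "s = 0")
  case True then show ?thesis using rs by simp
next
  case False
  then have s: "0 < s" using rs by simp
  define u where "u = r / s"
  have u: "0 \<le> u" "u \<le> 1" using rs s by (auto simp: u_def)
  have "G (u * a + (1 - u) * a) (u * s + (1 - u) * 0) \<le> u * G a s + (1 - u) * G a 0"
    by (rule G_convex) (use u in auto)
  moreover have "u * a + (1 - u) * a = a" by (simp add: algebra_simps)
  moreover have "u * s + (1 - u) * 0 = r" using s by (simp add: u_def)
  moreover have "G a 0 \<le> G a s" using G_lower[OF mean] G_zero by simp
  moreover have "(1 - u) * G a 0 \<le> (1 - u) * G a s" using u calculation(4) by (intro mult_left_mono) auto
  ultimately show ?thesis by (simp add: algebra_simps)
qed

lemma G_persp:
  assumes "0 \<le> xr"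
  shows "persp (\<lambda>z. LBINT \<xi>=-1..z. cdf P \<xi>) xb xr = G xb xr"
proof (cases "xr = 0")
  case True then show ?thesis by (simp add: persp_def G_zero)
next
  case False
  then have xr: "0 < xr" using assms by simp
  have m1: "(-1::ereal) = ereal (-1)" by (simp add: one_ereal_def)
  have "G xb xr = (\<integral>x. xr * pospart (- xb / xr - x) \<partial>P)"
    unfolding G_def
  proof (rule Bochner_Integration.integral_cong)
    fix x
    have "xr * (- xb / xr - x) = - (xb + x * xr)" using xr by (simp add: field_simps)
    then show "negpart (xb + x * xr) = xr * pospart (- xb / xr - x)"
      using xr unfolding negpart_def pospart_def
      by (simp add: max_mult_distrib_left)
  qed simp
  also have "\<dots> = xr * (\<integral>x. pospart (- xb / xr - x) \<partial>P)" by simp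
  finally show ?thesis using xr by (simp add: persp_def m1 H_eq)
qed

end

theorem proposition2:
  fixes M :: "'a measure" and P\<xi> :: "real measure"
    and \<delta> :: "'a \<Rightarrow> real \<Rightarrow> real"
    and T \<gamma> \<eta>p \<eta>m y0 :: real
  assumes "prob_space M"
    and "T > 0" and "0 < \<gamma>" and "\<gamma> \<le> T"
    and "0 < \<eta>p" and "\<eta>p \<le> 1" and "0 < \<eta>m" and "\<eta>m \<le> 1"
    and traj: "\<forall>\<omega>\<in>space M. admissible T \<gamma> (\<delta> \<omega>)"
    and joint: "(\<lambda>(\<omega>, t). \<delta> \<omega> t) \<in> borel_measurable (M \<Otimes>\<^sub>M restrict_space lebesgue {0..T})"
    and P\<xi>_sets: "sets P\<xi> = sets borel"
    and P\<xi>_def: "\<forall>B\<in>sets borel. emeasure P\<xi> B =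
           ennreal (\<integral>\<omega>. (1 / T) * (\<integral>t\<in>{0..T}. indicator B (\<delta> \<omega> t) \<partial>lebesgue) \<partial>M)"
    and mean_zero: "(\<integral>\<xi>. \<xi> \<partial>P\<xi>) = 0"
  defines "\<phi> \<equiv> (\<lambda>z. LBINT \<xi>=-1..z. cdf P\<xi> \<xi>)"
    and "\<eta>d \<equiv> 1 / \<eta>m - \<eta>p"
    and "Ey \<equiv> (\<lambda>xb xr. \<integral>\<omega>. soc \<eta>p \<eta>m xb xr (\<delta> \<omega>) y0 T \<partial>M)"
  shows "(\<forall>xb xr. xr \<ge> 0 \<longrightarrow> Ey xb xr = y0 + T * (\<eta>p * xb - \<eta>d * persp \<phi> xb xr))
       \<and> continuous_on {p :: real \<times> real. snd p \<ge> 0} (\<lambda>p. Ey (fst p) (snd p))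
       \<and> concave_on {p :: real \<times> real. snd p \<ge> 0} (\<lambda>p. Ey (fst p) (snd p))
       \<and> (\<forall>xr \<ge> 0. strict_mono (\<lambda>xb. Ey xb xr))
       \<and> (\<forall>xr \<ge> 0. filterlim (\<lambda>xb. Ey xb xr) at_top at_top)
       \<and> (\<forall>xb. antimono_on {0..} (\<lambda>xr. Ey xb xr))"
proof -
  have traj': "\<forall>\<omega>\<in>space M. \<forall>t\<in>{0..T}. \<delta> \<omega> t \<in> {-1..1}"
    using traj by (auto simp: admissible_def)
  interpret S: setting M P\<xi> \<delta> T
    unfolding setting_def using \<open>prob_space M\<close> \<open>T > 0\<close> traj' joint P\<xi>_sets P\<xi>_def by blast
  define G where "G = S.G"
  have Ey: "Ey xb xr = y0 + T * (\<eta>p * xb - \<eta>d * G xb xr)" for xb xr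
    unfolding Ey_def \<eta>d_def G_def using S.Ey_formula[OF \<open>0 < \<eta>m\<close> mean_zero] by simp
  have T: "0 < T" by fact
  have d: "0 \<le> \<eta>d"
  proof -
    have "1 \<le> 1 / \<eta>m" using \<open>0 < \<eta>m\<close> \<open>\<eta>m \<le> 1\<close> by (simp add: field_simps)
    then show ?thesis unfolding \<eta>d_def using \<open>\<eta>p \<le> 1\<close> by simp
  qed
  have Td: "0 \<le> T * \<eta>d" using T d by simp
  have p: "0 < \<eta>p" by fact
  have part1: "\<forall>xb xr. xr \<ge> 0 \<longrightarrow> Ey xb xr = y0 + T * (\<eta>p * xb - \<eta>d * persp \<phi> xb xr)"
    using S.G_persp unfolding Ey \<phi>_def G_def by simp
  have part2: "continuous_on {p :: real \<times> real. snd p \<ge> 0} (\<lambda>p. Ey (fst p) (snd p))"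
  proof (rule lipschitz_on_continuous_on)
    show "(T * \<eta>p + 2 * (T * \<eta>d))-lipschitz_on {p :: real \<times> real. snd p \<ge> 0} (\<lambda>p. Ey (fst p) (snd p))"
    proof (rule lipschitz_onI)
      fix x y :: "real \<times> real"
      obtain a c where x: "x = (a, c)" by fastforce
      obtain b e where y: "y = (b, e)" by fastforce
      have h1: "\<bar>a - b\<bar> \<le> dist x y" using dist_fst_le[of x y] by (simp add: x y dist_real_def)
      have h2: "\<bar>c - e\<bar> \<le> dist x y" using dist_snd_le[of x y] by (simp add: x y dist_real_def)
      have "dist (Ey (fst x) (snd x)) (Ey (fst y) (snd y)) = \<bar>T * \<eta>p * (a - b) - T * \<eta>d * (G a c - G b e)\<bar>"
        by (simp add: x y Ey dist_real_def algebra_simps)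
      also have "\<dots> \<le> T * \<eta>p * \<bar>a - b\<bar> + T * \<eta>d * \<bar>G a c - G b e\<bar>"
        using T p d abs_triangle_ineq4[of "T * \<eta>p * (a - b)" "T * \<eta>d * (G a c - G b e)"]
        by (simp add: abs_mult)
      also have "\<dots> \<le> T * \<eta>p * dist x y + T * \<eta>d * (2 * dist x y)"
      proof (rule add_mono)
        show "T * \<eta>p * \<bar>a - b\<bar> \<le> T * \<eta>p * dist x y" using h1 T p by simp
        have "\<bar>G a c - G b e\<bar> \<le> 2 * dist x y" using S.G_lip[of a c b e] h1 h2 unfolding G_def by linarith
        then show "T * \<eta>d * \<bar>G a c - G b e\<bar> \<le> T * \<eta>d * (2 * dist x y)" using Td by (rule mult_left_mono)
      qed
      also have "\<dots> = (T * \<eta>p + 2 * (T * \<eta>d)) * dist x y" by (simp add: algebra_simps)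
      finally show "dist (Ey (fst x) (snd x)) (Ey (fst y) (snd y)) \<le> (T * \<eta>p + 2 * (T * \<eta>d)) * dist x y" .
    qed (use T p d in simp)
  qed
  have part3: "concave_on {p :: real \<times> real. snd p \<ge> 0} (\<lambda>p. Ey (fst p) (snd p))"
    unfolding concave_on_iff
  proof (intro conjI ballI allI impI)
    show "convex {p :: real \<times> real. snd p \<ge> 0}"
      unfolding convex_def by auto
  next
    fix x y :: "real \<times> real" and u v :: real
    assume uv: "0 \<le> u" "0 \<le> v" "u + v = 1"
    obtain a c where x: "x = (a, c)" by fastforce
    obtain b e where y: "y = (b, e)" by fastforce
    have g: "G (u * a + v * b) (u * c + v * e) \<le> u * G a c + v * G b e"
      unfolding G_def by (rule S.G_convex[OF uv])
    have "T * \<eta>d * G (u * a + v * b) (u * c + v * e) \<le> T * \<eta>d * (u * G a c + v * G b e)"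
      using g Td by (rule mult_left_mono)
    moreover have "y0 = u * y0 + v * y0" using uv by (metis distrib_right mult_1)
    ultimately show "u * Ey (fst x) (snd x) + v * Ey (fst y) (snd y) \<le> Ey (fst (u *\<^sub>R x + v *\<^sub>R y)) (snd (u *\<^sub>R x + v *\<^sub>R y))"
      by (simp add: x y Ey algebra_simps)
  qed
  have part4: "\<forall>xr \<ge> 0. strict_mono (\<lambda>xb. Ey xb xr)"
  proof (intro allI impI strict_monoI)
    fix xr a b :: real assume "a < b"
    then have "G b xr \<le> G a xr" unfolding G_def by (intro S.G_anti) simp
    then have "T * \<eta>d * G b xr \<le> T * \<eta>d * G a xr" using Td by (rule mult_left_mono)
    moreover have "T * \<eta>p * a < T * \<eta>p * b" using \<open>a < b\<close> T p by simp
    ultimately show "Ey a xr < Ey b xr" by (simp add: Ey algebra_simps)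
  qed
  have part5: "\<forall>xr \<ge> 0. filterlim (\<lambda>xb. Ey xb xr) at_top at_top"
  proof (intro allI impI)
    fix xr :: real
    have lim: "filterlim (\<lambda>xb. (y0 - T * \<eta>d * G 0 xr) + (T * \<eta>p) * xb) at_top at_top"
      by (rule filterlim_tendsto_add_at_top[OF tendsto_const filterlim_tendsto_pos_mult_at_top[OF tendsto_const _ filterlim_ident]])
         (use T p in simp)
    show "filterlim (\<lambda>xb. Ey xb xr) at_top at_top"
    proof (rule filterlim_at_top_mono[OF lim])
      show "\<forall>\<^sub>F xb in at_top. y0 - T * \<eta>d * G 0 xr + T * \<eta>p * xb \<le> Ey xb xr"
        using eventually_ge_at_top[of "0::real"]
      proof eventually_elim
        case (elim xb)
        then have "G xb xr \<le> G 0 xr" unfolding G_def by (intro S.G_anti) simp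
        then have "T * \<eta>d * G xb xr \<le> T * \<eta>d * G 0 xr" using Td by (rule mult_left_mono)
        then show ?case by (simp add: Ey algebra_simps)
      qed
    qed
  qed
  have part6: "\<forall>xb. antimono_on {0..} (\<lambda>xr. Ey xb xr)"
  proof (intro allI monotone_onI)
    fix xb r s :: real assume "r \<in> {0..}" "s \<in> {0..}" "r \<le> s"
    then have "G xb r \<le> G xb s" unfolding G_def by (intro S.G_mono_xr[OF mean_zero]) auto
    then have "T * \<eta>d * G xb r \<le> T * \<eta>d * G xb s" using Td by (rule mult_left_mono)
    then show "Ey xb s \<le> Ey xb r" by (simp add: Ey algebra_simps)
  qed
  show ?thesis using part1 part2 part3 part4 part5 part6 by blast
qed

end
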